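(* Let $n\ge q\ge1$ be integers, $\lambda\in(0,1)$, and $r=\lceil n/q\rceil$. Then \[ \frac{r-(r-1)\lambda}{r} \;\ge\; \eta_\lambda(n,q) \;\ge\; \frac{r-(r-1)\lambda}{r+\lambda}. \] Furthermore, the graph $G$ on vertex set $[n]$ in which distinct $i,j$ are adjacent if and only if $i\equiv j \pmod r$ (so $G$ is a disjoint union of $r$ cliques and $\overline{P}(G;i)=\lceil i/r\rceil$) belongs to $\mathcal{G}_{n,q}$ and satisfies $\gamma_\lambda(G)\ge\frac{r-(r-1)\lambda}{r+\lambda}$.
   Context: For a finite base set $S$ and $f:2^S\to\mathbb{R}_{\ge0}$, write $f(A\mid B)=f(A\cup B)-f(B)$. $f$ is normalized if $f(\emptyset)=0$, monotone if $f(\{e\}\mid A)\ge0$ for all $e,A$, submodular if $f(\{e\}\mid A)\ge f(\{e\}\mid B)$ for $A\subseteq B\subseteq S$, $e\in S\setminus B$. Such $f$ has total curvature $\lambda\in(0,1)$ if $f(\{e\}\mid A)\ge(1-\lambda)f(\{e\})$ for all $e\in S$ and $A\subseteq S\setminus\{e\}$; $\mathcal{F}_\lambda$ is the set of normalized, monotone, submodular functions with total curvature $\lambda$. There are $n$ agents $[n]$ with decision sets $X_i\subseteq S$ forming a partition of $S$; action profiles $x\in X=X_1\times\cdots\times X_n$ are valued by $f(x)=f(\{x_1,\dots,x_n\})$, and $x_M=\{x_i:i\in M\}$. Let $x^{\mathrm{opt}}\in\arg\max_{x\in X}f(x)$. Given an undirected graph $G=([n],E)$ (information graph), let $\mathcal{N}_i=\{j<i:(j,i)\in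 E\}$. The generalized greedy algorithm produces $x^{\mathrm{sol}}$ with $x^{\mathrm{sol}}_i\in\arg\max_{x_i\in X_i}f(x_i\mid x^{\mathrm{sol}}_{\mathcal{N}_i})$, taking the worst among all possible greedy outcomes. Define $\gamma(f,X,G)=f(x^{\mathrm{sol}})/f(x^{\mathrm{opt}})$ and $\gamma_\lambda(G)=\inf_{f\in\mathcal{F}_\lambda,X}\gamma(f,X,G)$. Define recursively $\overline{P}(G;i)=1$ if $\mathcal{N}_i=\emptyset$ and $\overline{P}(G;i)=1+\max_{j\in\mathcal{N}_i}\overline{P}(G;j)$ otherwise; let $\mathcal{G}_{n,q}$ be the set of graphs on $[n]$ with $\max_i\overline{P}(G;i)\le q$, and $\eta_\lambda(n,q)=\sup_{G\in\mathcal{G}_{n,q}}\gamma_\lambda(G)$. *)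

theory Defs
  imports Complex_Main "HOL-Library.FuncSet"
begin

definition marg :: "(nat set \<Rightarrow> real) \<Rightarrow> nat set \<Rightarrow> nat set \<Rightarrow> real" where
  "marg f A B = f (A \<union> B) - f B"

definition in_F :: "real \<Rightarrow> nat set \<Rightarrow> (nat set \<Rightarrow> real) \<Rightarrow> bool" where
  "in_F lam S f \<longleftrightarrow>
     (\<forall>A. A \<subseteq> S \<longrightarrow> f A \<ge> 0) \<and>
     f {} = 0 \<and>
     (\<forall>e A. e \<in> S \<and> A \<subseteq> S \<longrightarrow> marg f {e} A \<ge> 0) \<and>
     (\<forall>e A B. A \<subseteq> B \<and> B \<subseteq> S \<and> e \<in> S - B \<longrightarrow> marg f {e} A \<ge> marg f {e} B) \<and>
     (\<forall>e A. e \<in> S \<and> A \<subseteq> S - {e} \<longrightarrow> marg f {e} A \<ge> (1 - lam) * f {e})"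

definition is_partition :: "nat \<Rightarrow> nat set \<Rightarrow> (nat \<Rightarrow> nat set) \<Rightarrow> bool" where
  "is_partition n S X \<longleftrightarrow>
     (\<forall>i\<in>{1..n}. X i \<noteq> {}) \<and>
     (\<forall>i\<in>{1..n}. \<forall>j\<in>{1..n}. i \<noteq> j \<longrightarrow> X i \<inter> X j = {}) \<and>
     (\<Union>i\<in>{1..n}. X i) = S"

definition is_graph :: "nat \<Rightarrow> (nat \<Rightarrow> nat \<Rightarrow> bool) \<Rightarrow> bool" where
  "is_graph n E \<longleftrightarrow> (\<forall>i j. E i j \<longrightarrow> E j i) \<and> (\<forall>i. \<not> E i i) \<and>
     (\<forall>i j. E i j \<longrightarrow> i \<in> {1..n} \<and> j \<in> {1..n})"

definition nbrs :: "(nat \<Rightarrow> nat \<Rightarrow> bool) \<Rightarrow> nat \<Rightarrow> nat set" where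
  "nbrs E i = {j. j < i \<and> E j i}"

function Pbar :: "(nat \<Rightarrow> nat \<Rightarrow> bool) \<Rightarrow> nat \<Rightarrow> nat" where
  "Pbar E i = (if {j. j < i \<and> E j i} = {} then 1
               else 1 + Max ((\<lambda>j. Pbar E j) ` {j. j < i \<and> E j i}))"
  by pat_completeness auto
termination by (relation "measure snd") auto

definition profiles :: "nat \<Rightarrow> (nat \<Rightarrow> nat set) \<Rightarrow> (nat \<Rightarrow> nat) set" where
  "profiles n X = PiE {1..n} X"

definition fval :: "(nat set \<Rightarrow> real) \<Rightarrow> nat \<Rightarrow> (nat \<Rightarrow> nat) \<Rightarrow> real" where
  "fval f n x = f (x ` {1..n})"

definition opt_val :: "nat \<Rightarrow> (nat set \<Rightarrow> real) \<Rightarrow> (nat \<Rightarrow> nat set) \<Rightarrow> real" where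
  "opt_val n f X = Max (fval f n ` profiles n X)"

text \<open>All possible outcomes of the generalized greedy algorithm (any tie-breaking).\<close>
definition greedy_outcomes ::
  "nat \<Rightarrow> (nat set \<Rightarrow> real) \<Rightarrow> (nat \<Rightarrow> nat set) \<Rightarrow> (nat \<Rightarrow> nat \<Rightarrow> bool) \<Rightarrow> (nat \<Rightarrow> nat) set" where
  "greedy_outcomes n f X E =
     {x \<in> profiles n X. \<forall>i\<in>{1..n}. \<forall>y\<in>X i.
        marg f {y} (x ` nbrs E i) \<le> marg f {x i} (x ` nbrs E i)}"

definition gamma ::
  "nat \<Rightarrow> (nat set \<Rightarrow> real) \<Rightarrow> (nat \<Rightarrow> nat set) \<Rightarrow> (nat \<Rightarrow> nat \<Rightarrow> bool) \<Rightarrow> real" where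
  "gamma n f X E = Inf ((\<lambda>x. fval f n x / opt_val n f X) ` greedy_outcomes n f X E)"

text \<open>gamma_lambda(G): infimum over all instances (finite S, f in F_lambda, partition X);
  instances with f(x_opt) = 0 (where the ratio is undefined) are excluded.\<close>
definition gamma_lam :: "real \<Rightarrow> nat \<Rightarrow> (nat \<Rightarrow> nat \<Rightarrow> bool) \<Rightarrow> real" where
  "gamma_lam lam n E = Inf {gamma n f X E | S f X.
      finite S \<and> in_F lam S f \<and> is_partition n S X \<and> opt_val n f X > 0}"

definition graphs_nq :: "nat \<Rightarrow> nat \<Rightarrow> (nat \<Rightarrow> nat \<Rightarrow> bool) set" where
  "graphs_nq n q = {E. is_graph n E \<and> (\<forall>i\<in>{1..n}. Pbar E i \<le> q)}"

definition eta :: "real \<Rightarrow> nat \<Rightarrow> nat \<Rightarrow> real" where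
  "eta lam n q = Sup (gamma_lam lam n ` graphs_nq n q)"

end

theory Submission
  imports Defs
begin

lemma marg_mem: "e \<in> A \<Longrightarrow> marg f {e} A = 0"
  by (simp add: marg_def insert_absorb)

lemma inF_nonneg: "in_F lam S f \<Longrightarrow> A \<subseteq> S \<Longrightarrow> f A \<ge> 0"
  by (simp add: in_F_def)

lemma inF_empty: "in_F lam S f \<Longrightarrow> f {} = 0"
  by (simp add: in_F_def)

lemma inF_mono: "in_F lam S f \<Longrightarrow> e \<in> S \<Longrightarrow> A \<subseteq> S \<Longrightarrow> marg f {e} A \<ge> 0"
  by (simp add: in_F_def)

lemma inF_sub: "in_F lam S f \<Longrightarrow> e \<in> S \<Longrightarrow> A \<subseteq> B \<Longrightarrow> B \<subseteq> S \<Longrightarrow> marg f {e} B \<le> marg f {e} A"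
proof (cases "e \<in> B")
  case True
  assume "in_F lam S f" "e \<in> S" "A \<subseteq> B" "B \<subseteq> S"
  then show ?thesis using True marg_mem[of e B f] inF_mono[of lam S f e A] by auto
next
  case False
  assume "in_F lam S f" "e \<in> S" "A \<subseteq> B" "B \<subseteq> S"
  then show ?thesis using False unfolding in_F_def by (meson DiffI)
qed

lemma inF_curv: "in_F lam S f \<Longrightarrow> e \<in> S \<Longrightarrow> A \<subseteq> S \<Longrightarrow> e \<notin> A \<Longrightarrow> marg f {e} A \<ge> (1 - lam) * f {e}"
proof -
  assume a: "in_F lam S f" "e \<in> S" "A \<subseteq> S" "e \<notin> A"
  then have "A \<subseteq> S - {e}" by blast
  then show ?thesis using a(1,2) unfolding in_F_def by simp
qed

lemma inF_single: "in_F lam S f \<Longrightarrow> e \<in> S \<Longrightarrow> A \<subseteq> S \<Longrightarrow> marg f {e} A \<le> f {e}"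
  using inF_sub[of lam S f e "{}" A] by (simp add: marg_def inF_empty)

lemma telescope:
  "f (B \<union> x ` (T \<inter> {..<m})) - f B = (\<Sum>i\<in>T \<inter> {..<(m::nat)}. marg f {x i} (B \<union> x ` (T \<inter> {..<i})))"
proof (induction m)
  case 0
  then show ?case by simp
next
  case (Suc m)
  show ?case
  proof (cases "m \<in> T")
    case True
    have e: "T \<inter> {..<Suc m} = insert m (T \<inter> {..<m})" unfolding lessThan_Suc using True by blast
    have "f (B \<union> x ` (T \<inter> {..<Suc m})) = f (B \<union> x ` (T \<inter> {..<m})) + marg f {x m} (B \<union> x ` (T \<inter> {..<m}))"
    proof -
      have "B \<union> x ` (insert m (T \<inter> {..<m})) = {x m} \<union> (B \<union> x ` (T \<inter> {..<m}))" by auto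
      then have "f (B \<union> x ` (insert m (T \<inter> {..<m}))) = f ({x m} \<union> (B \<union> x ` (T \<inter> {..<m})))" by (rule arg_cong)
      then show ?thesis unfolding e marg_def by linarith
    qed
    moreover have "(\<Sum>i\<in>insert m (T \<inter> {..<m}). marg f {x i} (B \<union> x ` (T \<inter> {..<i})))
       = marg f {x m} (B \<union> x ` (T \<inter> {..<m})) + (\<Sum>i\<in>T \<inter> {..<m}. marg f {x i} (B \<union> x ` (T \<inter> {..<i})))"
      by (rule sum.insert) auto
    ultimately show ?thesis using Suc.IH unfolding e by linarith
  next
    case False
    have e: "T \<inter> {..<Suc m} = T \<inter> {..<m}" unfolding lessThan_Suc using False by blast
    show ?thesis unfolding e by (rule Suc.IH)
  qed
qed

lemma telescope':
  assumes "T \<subseteq> {..<(m::nat)}"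
  shows "f (B \<union> x ` T) - f B = (\<Sum>i\<in>T. marg f {x i} (B \<union> x ` (T \<inter> {..<i})))"
proof -
  have "T \<inter> {..<m} = T" using assms by auto
  then show ?thesis using telescope[of f B x T m] by simp
qed

lemma greedy_exists:
  assumes fin: "\<And>i. i \<in> {1..n} \<Longrightarrow> finite (X i)" and ne: "\<And>i. i \<in> {1..n} \<Longrightarrow> X i \<noteq> {}"
  shows "greedy_outcomes n f X E \<noteq> {}"
proof -
  have "m \<le> n \<Longrightarrow> \<exists>x \<in> PiE {1..m} X. \<forall>i\<in>{1..m}. \<forall>y\<in>X i.
        marg f {y} (x ` nbrs E i) \<le> marg f {x i} (x ` nbrs E i)" for m
  proof (induction m)
    case 0
    then show ?case by auto
  next
    case (Suc m)
    then obtain x where x: "x \<in> PiE {1..m} X" and g: "\<forall>i\<in>{1..m}. \<forall>y\<in>X i.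
        marg f {y} (x ` nbrs E i) \<le> marg f {x i} (x ` nbrs E i)" by auto
    let ?h = "\<lambda>y. marg f {y} (x ` nbrs E (Suc m))"
    have sm: "Suc m \<in> {1..n}" using Suc by auto
    have "?h ` X (Suc m) \<noteq> {}" "finite (?h ` X (Suc m))" using fin[OF sm] ne[OF sm] by auto
    then have "Max (?h ` X (Suc m)) \<in> ?h ` X (Suc m)" by (rule Max_in[rotated])
    then obtain z where z: "z \<in> X (Suc m)" "?h z = Max (?h ` X (Suc m))" by auto
    have zmax: "\<forall>y\<in>X (Suc m). ?h y \<le> ?h z" using z fin[OF sm] by simp
    define x' where "x' = x(Suc m := z)"
    have nb: "nbrs E i \<subseteq> {..<i}" for i by (auto simp: nbrs_def)
    have img: "i \<le> Suc m \<Longrightarrow> x' ` nbrs E i = x ` nbrs E i" for i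
      using nb[of i] unfolding x'_def by (auto intro!: image_cong)
    have "x' \<in> PiE {1..Suc m} X"
    proof -
      have "{1..Suc m} = insert (Suc m) {1..m}" by auto
      then show ?thesis using x z unfolding x'_def by (auto simp: PiE_def extensional_def)
    qed
    moreover have "\<forall>i\<in>{1..Suc m}. \<forall>y\<in>X i. marg f {y} (x' ` nbrs E i) \<le> marg f {x' i} (x' ` nbrs E i)"
    proof (intro ballI)
      fix i y assume i: "i \<in> {1..Suc m}" and y: "y \<in> X i"
      show "marg f {y} (x' ` nbrs E i) \<le> marg f {x' i} (x' ` nbrs E i)"
      proof (cases "i = Suc m")
        case True
        then show ?thesis using zmax y img[of i] unfolding x'_def by simp
      next
        case False
        then have "i \<in> {1..m}" using i by auto
        then show ?thesis using g y img[of i] False unfolding x'_def by simp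
      qed
    qed
    ultimately show ?case by blast
  qed
  from this[of n] show ?thesis unfolding greedy_outcomes_def profiles_def by auto
qed

lemma lower_main:
  fixes r :: nat and lam :: real
  assumes r1: "1 \<le> r" and lam0: "0 \<le> lam" and lam1: "lam \<le> 1"
    and F: "in_F lam S f" and P: "is_partition n S X"
    and x: "x \<in> greedy_outcomes n f X G" and p: "p \<in> profiles n X"
    and G: "G = (\<lambda>i j. i \<in> {1..n} \<and> j \<in> {1..n} \<and> i \<noteq> j \<and> i mod r = j mod r)"
  shows "(real r - (real r - 1) * lam) * fval f n p \<le> (real r + lam) * fval f n x"
proof -
  define N where "N = {1..n}"
  have XS: "i \<in> N \<Longrightarrow> X i \<subseteq> S" for i using P unfolding is_partition_def N_def by auto
  have disj: "i \<in> N \<Longrightarrow> j \<in> N \<Longrightarrow> i \<noteq> j \<Longrightarrow> e \<in> X i \<Longrightarrow> e \<notin> X j" for i j e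
    using P unfolding is_partition_def N_def by blast
  have xX: "i \<in> N \<Longrightarrow> x i \<in> X i" for i using x unfolding greedy_outcomes_def profiles_def N_def by auto
  have pX: "i \<in> N \<Longrightarrow> p i \<in> X i" for i using p unfolding profiles_def N_def by auto
  have xS: "i \<in> N \<Longrightarrow> x i \<in> S" for i using xX XS by blast
  have pS: "i \<in> N \<Longrightarrow> p i \<in> S" for i using pX XS by blast
  have xN: "T \<subseteq> N \<Longrightarrow> x ` T \<subseteq> S" for T using xS by blast
  have pN: "T \<subseteq> N \<Longrightarrow> p ` T \<subseteq> S" for T using pS by blast
  have nbrs: "i \<in> N \<Longrightarrow> nbrs G i = {j \<in> N. j mod r = i mod r} \<inter> {..<i}" for i
    unfolding nbrs_def G N_def by auto
  have nbrsN: "i \<in> N \<Longrightarrow> nbrs G i \<subseteq> N" for i using nbrs by auto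
  define a where "a i = marg f {x i} (x ` nbrs G i)" for i
  have greedy: "i \<in> N \<Longrightarrow> y \<in> X i \<Longrightarrow> marg f {y} (x ` nbrs G i) \<le> a i" for i y
    using x unfolding greedy_outcomes_def a_def N_def by auto
  have a_le: "i \<in> N \<Longrightarrow> a i \<le> f {x i}" for i
    unfolding a_def using inF_single[OF F xS xN[OF nbrsN]] by blast
  have a_ge: "i \<in> N \<Longrightarrow> a i \<ge> 0" for i
    unfolding a_def using inF_mono[OF F xS xN[OF nbrsN]] by blast
  have NN: "N \<subseteq> {..<Suc n}" unfolding N_def by auto
  define sol where "sol = x ` N"
  define opt where "opt = p ` N"
  have solS: "sol \<subseteq> S" unfolding sol_def using xN by blast
  have optS: "opt \<subseteq> S" unfolding opt_def using pN by blast
  define D where "D = (\<Sum>i\<in>N. if x i = p i then 0 else a i)"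
  define AA where "AA = (\<Sum>i\<in>N. a i)"
  have DA: "D \<le> AA" unfolding D_def AA_def by (rule sum_mono) (use a_ge in auto)
  have s3: "f (sol \<union> opt) - f sol \<le> D"
  proof -
    have "f (sol \<union> p ` N) - f sol = (\<Sum>i\<in>N. marg f {p i} (sol \<union> p ` (N \<inter> {..<i})))"
      by (rule telescope'[OF NN])
    also have "\<dots> \<le> (\<Sum>i\<in>N. if x i = p i then 0 else a i)"
    proof (rule sum_mono)
      fix i assume i: "i \<in> N"
      have "marg f {p i} (sol \<union> p ` (N \<inter> {..<i})) \<le> marg f {p i} sol"
        by (rule inF_sub[OF F pS[OF i]]) (use solS pN in auto)
      moreover have "marg f {p i} sol \<le> (if x i = p i then 0 else a i)"
      proof (cases "x i = p i")
        case True
        then have "p i \<in> sol" unfolding sol_def using i by force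
        then show ?thesis using True marg_mem by simp
      next
        case False
        have "x ` nbrs G i \<subseteq> sol" unfolding sol_def using nbrsN[OF i] by auto
        then have "marg f {p i} sol \<le> marg f {p i} (x ` nbrs G i)"
          by (rule inF_sub[OF F pS[OF i]]) (use solS in auto)
        also have "\<dots> \<le> a i" by (rule greedy[OF i pX[OF i]])
        finally show ?thesis using False by simp
      qed
      ultimately show "marg f {p i} (sol \<union> p ` (N \<inter> {..<i})) \<le> (if x i = p i then 0 else a i)" by linarith
    qed
    finally show ?thesis unfolding opt_def D_def .
  qed
  have s2: "f (opt \<union> sol) - f opt \<ge> (1 - lam) * D"
  proof -
    have "f (opt \<union> x ` N) - f opt = (\<Sum>i\<in>N. marg f {x i} (opt \<union> x ` (N \<inter> {..<i})))"
      by (rule telescope'[OF NN])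
    also have "\<dots> \<ge> (\<Sum>i\<in>N. (1 - lam) * (if x i = p i then 0 else a i))"
    proof (rule sum_mono)
      fix i assume i: "i \<in> N"
      have sub: "opt \<union> x ` (N \<inter> {..<i}) \<subseteq> S" using optS xN by auto
      show "(1 - lam) * (if x i = p i then 0 else a i) \<le> marg f {x i} (opt \<union> x ` (N \<inter> {..<i}))"
      proof (cases "x i = p i")
        case True
        then show ?thesis using inF_mono[OF F xS[OF i] sub] by simp
      next
        case False
        have notin: "x i \<notin> opt \<union> x ` (N \<inter> {..<i})"
        proof
          assume "x i \<in> opt \<union> x ` (N \<inter> {..<i})"
          then obtain j where j: "j \<in> N" "x i = p j \<or> (x i = x j \<and> j < i)" unfolding opt_def by auto
          show False
          proof (cases "j = i")
            case True then show False using j False by auto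
          next
            case False
            then have "x i \<notin> X j" using disj[OF i j(1)] xX[OF i] by auto
            then show False using j pX xX by auto
          qed
        qed
        have "(1 - lam) * a i \<le> (1 - lam) * f {x i}"
          using a_le[OF i] lam1 by (simp add: mult_left_mono)
        also have "\<dots> \<le> marg f {x i} (opt \<union> x ` (N \<inter> {..<i}))"
          by (rule inF_curv[OF F xS[OF i] sub notin])
        finally show ?thesis using False by simp
      qed
    qed
    finally show ?thesis unfolding sol_def D_def by (simp add: sum_distrib_left)
  qed
  define C where "C k = {i \<in> N. i mod r = k}" for k
  have s4k: "f sol \<ge> (\<Sum>i\<in>C k. a i) + (1 - lam) * (\<Sum>i\<in>N - C k. a i)" for k
  proof -
    have CN: "C k \<subseteq> N" unfolding C_def by auto
    have CU: "C k \<subseteq> {..<Suc n}" using CN NN by auto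
    have e1: "f ({} \<union> x ` C k) - f {} = (\<Sum>i\<in>C k. marg f {x i} ({} \<union> x ` (C k \<inter> {..<i})))"
      by (rule telescope'[OF CU])
    have "(\<Sum>i\<in>C k. marg f {x i} ({} \<union> x ` (C k \<inter> {..<i}))) = (\<Sum>i\<in>C k. a i)"
    proof (rule sum.cong)
      fix i assume i: "i \<in> C k"
      then have "C k \<inter> {..<i} = nbrs G i" using nbrs[of i] unfolding C_def by auto
      then show "marg f {x i} ({} \<union> x ` (C k \<inter> {..<i})) = a i" unfolding a_def by simp
    qed simp
    then have fC: "f (x ` C k) = (\<Sum>i\<in>C k. a i)" using e1 inF_empty[OF F] by simp
    have DU: "N - C k \<subseteq> {..<Suc n}" using NN by auto
    have e2: "f (x ` C k \<union> x ` (N - C k)) - f (x ` C k) = (\<Sum>i\<in>N - C k. marg f {x i} (x ` C k \<union> x ` ((N - C k) \<inter> {..<i})))"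
      by (rule telescope'[OF DU])
    have "(\<Sum>i\<in>N - C k. marg f {x i} (x ` C k \<union> x ` ((N - C k) \<inter> {..<i}))) \<ge> (\<Sum>i\<in>N - C k. (1 - lam) * a i)"
    proof (rule sum_mono)
      fix i assume i: "i \<in> N - C k"
      have iN: "i \<in> N" using i by auto
      have sub: "x ` C k \<union> x ` ((N - C k) \<inter> {..<i}) \<subseteq> S" using xN CN by auto
      have notin: "x i \<notin> x ` C k \<union> x ` ((N - C k) \<inter> {..<i})"
      proof
        assume "x i \<in> x ` C k \<union> x ` ((N - C k) \<inter> {..<i})"
        then obtain j where j: "j \<in> N" "j \<noteq> i" "x i = x j" using i CN by auto
        then show False using disj[OF iN j(1) j(2)[symmetric] xX[OF iN]] xX[OF j(1)] by auto
      qed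
      have "(1 - lam) * a i \<le> (1 - lam) * f {x i}"
        using a_le[OF iN] lam1 by (simp add: mult_left_mono)
      also have "\<dots> \<le> marg f {x i} (x ` C k \<union> x ` ((N - C k) \<inter> {..<i}))"
        by (rule inF_curv[OF F xS[OF iN] sub notin])
      finally show "(1 - lam) * a i \<le> marg f {x i} (x ` C k \<union> x ` ((N - C k) \<inter> {..<i}))" .
    qed
    moreover have "x ` C k \<union> x ` (N - C k) = sol" unfolding sol_def using CN by auto
    ultimately show ?thesis using e2 fC by (simp add: sum_distrib_left)
  qed
  have sumC: "(\<Sum>k<r. (\<Sum>i\<in>C k. a i)) = AA"
    unfolding C_def AA_def
    by (rule sum.group) (use r1 in \<open>auto simp: N_def\<close>)
  have sumD: "(\<Sum>i\<in>N - C k. a i) = AA - (\<Sum>i\<in>C k. a i)" for k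
  proof -
    have "C k \<subseteq> N" "finite N" unfolding C_def N_def by auto
    then show ?thesis unfolding AA_def by (simp add: sum_diff)
  qed
  have "(\<Sum>k<r. f sol) \<ge> (\<Sum>k<r. (\<Sum>i\<in>C k. a i) + (1 - lam) * (AA - (\<Sum>i\<in>C k. a i)))"
    by (rule sum_mono) (use s4k sumD in auto)
  also have "(\<Sum>k<r. (\<Sum>i\<in>C k. a i) + (1 - lam) * (AA - (\<Sum>i\<in>C k. a i)))
      = lam * AA + (1 - lam) * real r * AA"
    using sumC by (simp add: sum.distrib sum_subtractf sum_distrib_left[symmetric] algebra_simps)
  finally have s4: "real r * f sol \<ge> (real r - (real r - 1) * lam) * AA" by (simp add: algebra_simps)
  have U: "sol \<union> opt = opt \<union> sol" by auto
  have fo: "f opt \<le> f sol + lam * D" using s2 s3 U by (simp add: algebra_simps)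
  have "lam * D \<le> lam * AA" using DA lam0 by (simp add: mult_left_mono)
  then have fo2: "f opt \<le> f sol + lam * AA" using fo by linarith
  have pos: "real r - (real r - 1) * lam \<ge> 0"
  proof -
    have "(real r - 1) * lam \<le> (real r - 1) * 1" using lam1 r1 by (intro mult_left_mono) auto
    then show ?thesis by simp
  qed
  have "(real r - (real r - 1) * lam) * f opt \<le> (real r - (real r - 1) * lam) * (f sol + lam * AA)"
    using fo2 pos by (rule mult_left_mono)
  also have "\<dots> = (real r - (real r - 1) * lam) * f sol + lam * ((real r - (real r - 1) * lam) * AA)"
    by (simp add: algebra_simps)
  also have "\<dots> \<le> (real r - (real r - 1) * lam) * f sol + lam * (real r * f sol)"
    using s4 lam0 by (simp add: mult_left_mono)
  also have "\<dots> = (real r + lam) * f sol" by (simp add: algebra_simps)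
  finally show ?thesis unfolding fval_def sol_def opt_def N_def .
qed

definition gfun :: "real \<Rightarrow> nat \<Rightarrow> real" where
  "gfun lam m = (if m = 0 then 0 else 1 + (1 - lam) * (real m - 1))"

definition ffun :: "real \<Rightarrow> nat set \<Rightarrow> nat set \<Rightarrow> nat set \<Rightarrow> real" where
  "ffun lam Sh Oh A = gfun lam (card (A \<inter> Sh)) + real (card (A \<inter> Oh))"

lemma ffun_marg:
  assumes fin: "finite Sh" "finite Oh" and dj: "Sh \<inter> Oh = {}" and e: "e \<notin> A"
  shows "marg (ffun lam Sh Oh) {e} A =
    (if e \<in> Sh then (if card (A \<inter> Sh) = 0 then 1 else 1 - lam) else if e \<in> Oh then 1 else 0)"
proof -
  have u: "({e} \<union> A) = insert e A" by auto
  show ?thesis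
  proof (cases "e \<in> Sh")
    case True
    then have "e \<notin> Oh" using dj by auto
    then have o: "insert e A \<inter> Oh = A \<inter> Oh" by auto
    have s: "insert e A \<inter> Sh = insert e (A \<inter> Sh)" using True by auto
    have c: "card (insert e (A \<inter> Sh)) = Suc (card (A \<inter> Sh))" using e fin by simp
    show ?thesis unfolding marg_def ffun_def u o s c using True
      by (simp add: gfun_def algebra_simps)
  next
    case False
    then have s: "insert e A \<inter> Sh = A \<inter> Sh" by auto
    show ?thesis
    proof (cases "e \<in> Oh")
      case True
      have o: "insert e A \<inter> Oh = insert e (A \<inter> Oh)" using True by auto
      have c: "card (insert e (A \<inter> Oh)) = Suc (card (A \<inter> Oh))" using e fin by simp
      show ?thesis unfolding marg_def ffun_def u o s c using True False by simp
    next
      case F2: False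
      then have o: "insert e A \<inter> Oh = A \<inter> Oh" by auto
      show ?thesis unfolding marg_def ffun_def u o s using False F2 by simp
    qed
  qed
qed

lemma ffun_single:
  assumes "Sh \<inter> Oh = {}"
  shows "ffun lam Sh Oh {e} = (if e \<in> Sh \<union> Oh then 1 else 0)"
  using assms by (auto simp: ffun_def gfun_def Int_insert_left)

lemma gfun_nonneg: "lam \<le> 1 \<Longrightarrow> gfun lam m \<ge> 0"
  unfolding gfun_def by (auto intro!: add_nonneg_nonneg mult_nonneg_nonneg)

lemma ffun_inF:
  assumes fin: "finite Sh" "finite Oh" and dj: "Sh \<inter> Oh = {}" and lam: "0 \<le> lam" "lam \<le> 1"
    and finS: "finite S"
  shows "in_F lam S (ffun lam Sh Oh)"
proof -
  let ?f = "ffun lam Sh Oh"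
  have nn: "?f A \<ge> 0" for A unfolding ffun_def using gfun_nonneg[OF lam(2)] by (simp add: add_nonneg_nonneg)
  have e0: "?f {} = 0" by (simp add: ffun_def gfun_def)
  have mono: "marg ?f {e} A \<ge> 0" for e A
  proof (cases "e \<in> A")
    case True then show ?thesis by (simp add: marg_mem)
  next
    case False then show ?thesis using ffun_marg[OF fin dj False, of lam] lam by auto
  qed
  have sub: "marg ?f {e} A \<ge> marg ?f {e} B" if "A \<subseteq> B" "B \<subseteq> S" "e \<in> S - B" for e A B
  proof -
    have eA: "e \<notin> A" "e \<notin> B" using that by auto
    have "card (A \<inter> Sh) \<le> card (B \<inter> Sh)" using that fin by (intro card_mono) auto
    then show ?thesis using ffun_marg[OF fin dj eA(1), of lam] ffun_marg[OF fin dj eA(2), of lam] lam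
      by auto
  qed
  have curv: "marg ?f {e} A \<ge> (1 - lam) * ?f {e}" if "A \<subseteq> S - {e}" for e A
  proof -
    have eA: "e \<notin> A" using that by auto
    show ?thesis using ffun_marg[OF fin dj eA, of lam] ffun_single[OF dj, of lam e] lam by auto
  qed
  show ?thesis unfolding in_F_def using nn e0 mono sub curv by blast
qed

declare Pbar.simps[simp del]

lemma Pbar_ge1: "Pbar E i \<ge> 1"
  by (subst Pbar.simps) simp

lemma Pbar_lt:
  assumes "j < i" "E j i"
  shows "Pbar E j < Pbar E i"
proof -
  let ?M = "{j. j < i \<and> E j i}"
  have jM: "j \<in> ?M" using assms by auto
  have fin: "finite ?M" by (rule finite_subset[of _ "{..<i}"]) auto
  have "Pbar E j \<le> Max (Pbar E ` ?M)" using fin jM by (intro Max_ge) auto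
  moreover have "Pbar E i = 1 + Max (Pbar E ` ?M)" using jM by (subst Pbar.simps) auto
  ultimately show ?thesis by simp
qed

lemma indep_exists:
  fixes n q r :: nat
  assumes E: "E \<in> graphs_nq n q" and q1: "1 \<le> q" and r: "r = nat \<lceil>real n / real q\<rceil>"
  shows "\<exists>I. I \<subseteq> {1..n} \<and> card I = r \<and> (\<forall>i\<in>I. \<forall>j\<in>I. \<not> E i j)"
proof -
  have g: "is_graph n E" and pq: "\<forall>i\<in>{1..n}. Pbar E i \<le> q" using E unfolding graphs_nq_def by auto
  define L where "L p = {i \<in> {1..n}. Pbar E i = p}" for p
  have "(\<Sum>p\<in>{1..q}. card (L p)) = n"
  proof -
    have "(\<Sum>p\<in>{1..q}. (\<Sum>i\<in>{i \<in> {1..n}. Pbar E i = p}. (1::nat))) = (\<Sum>i\<in>{1..n}. 1)"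
      by (rule sum.group) (use pq Pbar_ge1 in auto)
    then show ?thesis unfolding L_def by simp
  qed
  have "\<exists>p\<in>{1..q}. card (L p) \<ge> r"
  proof (rule ccontr)
    assume "\<not> ?thesis"
    then have lt: "\<forall>p\<in>{1..q}. card (L p) < r" by auto
    then have r1: "r \<ge> 1" using q1 by force
    have "\<forall>p\<in>{1..q}. card (L p) \<le> r - 1" using lt by auto
    then have "(\<Sum>p\<in>{1..q}. card (L p)) \<le> (\<Sum>p\<in>{1..q}. r - 1)" by (intro sum_mono) auto
    then have le: "n \<le> q * (r - 1)" using \<open>(\<Sum>p\<in>{1..q}. card (L p)) = n\<close> by simp
    have c: "real_of_int \<lceil>real n / real q\<rceil> < real n / real q + 1" using ceiling_correct[of "real n / real q"] by linarith
    have rr: "real r = real_of_int \<lceil>real n / real q\<rceil>" using r r1 by simp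
    have "real (q * (r - 1)) = real q * (real r - 1)" using r1 by (simp add: of_nat_diff)
    also have "\<dots> < real q * (real n / real q)" using c rr q1 by (intro mult_strict_left_mono) auto
    also have "\<dots> = real n" using q1 by simp
    finally show False using le by linarith
  qed
  then obtain p where p: "card (L p) \<ge> r" by auto
  have "finite (L p)" unfolding L_def by auto
  then obtain I where I: "I \<subseteq> L p" "card I = r" using p obtain_subset_with_card_n by metis
  have "\<forall>i\<in>I. \<forall>j\<in>I. \<not> E i j"
  proof (intro ballI notI)
    fix i j assume i: "i \<in> I" and j: "j \<in> I" and e: "E i j"
    have eq: "Pbar E i = Pbar E j" using i j I unfolding L_def by auto
    have "i \<noteq> j" using e g unfolding is_graph_def by auto
    then have "i < j \<or> j < i" by auto
    then show False
    proof
      assume "i < j" then show False using Pbar_lt[of i j E] e eq by simp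
    next
      assume "j < i" then show False using Pbar_lt[of j i E] e g eq unfolding is_graph_def by auto
    qed
  qed
  moreover have "I \<subseteq> {1..n}" using I unfolding L_def by auto
  ultimately show ?thesis using I by blast
qed

lemma Pbar_G:
  fixes r n :: nat
  assumes r1: "1 \<le> r"
    and G: "G = (\<lambda>i j. i \<in> {1..n} \<and> j \<in> {1..n} \<and> i \<noteq> j \<and> i mod r = j mod r)"
  shows "i \<in> {1..n} \<Longrightarrow> Pbar G i = (i - 1) div r + 1"
proof (induction i rule: less_induct)
  case (less i)
  define M where "M = {j. j < i \<and> G j i}"
  have M: "M = {j. 1 \<le> j \<and> j < i \<and> j mod r = i mod r}" using less.prems unfolding M_def G by auto
  show ?case
  proof (cases "i \<le> r")
    case True
    have "M = {}"
    proof (rule ccontr)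
      assume "M \<noteq> {}"
      then obtain j where j: "1 \<le> j" "j < i" "j mod r = i mod r" using M by auto
      have jm: "j mod r = j" using j True by simp
      show False
      proof (cases "i = r")
        case True then show False using j jm by simp
      next
        case False then have "i mod r = i" using \<open>i \<le> r\<close> by simp
        then show False using j jm by simp
      qed
    qed
    then have "Pbar G i = 1" by (subst Pbar.simps) (simp add: M_def[symmetric])
    moreover have "(i - 1) div r = 0" using True r1 by simp
    ultimately show ?thesis by simp
  next
    case False
    have iM: "i - r \<in> M" unfolding M using False r1 le_mod_geq[of r i] by auto
    have bnd: "Pbar G j \<le> (i - 1) div r" if j: "j \<in> M" for j
    proof -
      have j': "1 \<le> j" "j < i" "j mod r = i mod r" using j M by auto
      have "r dvd i - j" using j' mod_eq_dvd_iff_nat[of j i r] by simp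
      then have "r \<le> i - j" using j' by (intro dvd_imp_le) auto
      then have ji: "j - 1 \<le> (i - 1) - r" using j' by arith
      have "Pbar G j = (j - 1) div r + 1" using less.IH[of j] j' less.prems by auto
      also have "\<dots> \<le> ((i - 1) - r) div r + 1" using ji by (simp add: div_le_mono)
      also have "\<dots> = (i - 1) div r" using False r1 le_div_geq[of r "i - 1"] by simp
      finally show ?thesis .
    qed
    have att: "Pbar G (i - r) = (i - 1) div r"
    proof -
      have "Pbar G (i - r) = (i - r - 1) div r + 1" using less.IH[of "i - r"] iM M less.prems by auto
      also have "\<dots> = (i - 1) div r" using False r1 le_div_geq[of r "i - 1"] by (simp add: diff_commute)
      finally show ?thesis .
    qed
    have fin: "finite M" unfolding M_def by (rule finite_subset[of _ "{..<i}"]) auto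
    have inM: "(i - 1) div r \<in> Pbar G ` M" using iM att by (metis image_eqI)
    have mx: "Max (Pbar G ` M) = (i - 1) div r"
      by (rule Max_eqI) (use fin bnd inM in auto)
    have "Pbar G i = 1 + Max (Pbar G ` M)" using iM by (subst Pbar.simps) (auto simp: M_def)
    then show ?thesis using mx by simp
  qed
qed

lemma ceil_div:
  fixes i r :: nat assumes "1 \<le> r" "1 \<le> i"
  shows "real ((i - 1) div r + 1) = real_of_int \<lceil>real i / real r\<rceil>"
proof -
  define d where "d = (i - 1) div r"
  define s where "s = (i - 1) mod r"
  have ieq: "i = r * d + s + 1" using assms unfolding d_def s_def by simp
  have sr: "s < r" using assms unfolding s_def by simp
  have rpos: "real r > 0" using assms by simp
  have "\<lceil>real i / real r\<rceil> = int d + 1"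
  proof (rule ceiling_unique)
    have "real i / real r = real d + (real s + 1) / real r" using rpos unfolding ieq by (simp add: field_simps)
    moreover have "(real s + 1) / real r > 0" using rpos by simp
    moreover have "(real s + 1) / real r \<le> 1" using rpos sr by (simp add: field_simps)
    ultimately show "real_of_int (int d + 1) - 1 < real i / real r" "real i / real r \<le> real_of_int (int d + 1)" by auto
  qed
  then show ?thesis unfolding d_def by simp
qed

lemma instance_props:
  fixes I :: "nat set" and n :: nat and lam :: real
  assumes I: "I \<subseteq> {1..n}" and lam: "0 \<le> lam" "lam \<le> 1"
    and Sh: "Sh = (\<lambda>i. 2*i) ` I" and Oh: "Oh = (\<lambda>i. 2*i+1) ` I"
    and X: "X = (\<lambda>i. if i \<in> I then {2*i, 2*i+1} else {2*i})"
    and S: "S = (\<Union>i\<in>{1..n}. X i)"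
  shows "finite S" "in_F lam S (ffun lam Sh Oh)" "is_partition n S X"
    "opt_val n (ffun lam Sh Oh) X \<ge> real (card I)"
proof -
  have finI: "finite I" using I finite_subset by blast
  have fin: "finite Sh" "finite Oh" using finI Sh Oh by auto
  have dj: "Sh \<inter> Oh = {}" unfolding Sh Oh by auto presburger
  show finS: "finite S" unfolding S X by auto
  show "in_F lam S (ffun lam Sh Oh)" by (rule ffun_inF[OF fin dj lam finS])
  show "is_partition n S X" unfolding is_partition_def S X by auto
  define p where "p = (\<lambda>i. if i \<in> {1..n} then (if i \<in> I then 2*i+1 else 2*i) else undefined)"
  have pP: "p \<in> profiles n X" unfolding profiles_def p_def X by auto
  have finP: "finite (profiles n X)" unfolding profiles_def X by (intro finite_PiE) auto
  have a: "p ` {1..n} \<inter> Sh = {}"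
  proof -
    have "p i \<notin> Sh" if "i \<in> {1..n}" for i
    proof
      assume "p i \<in> Sh"
      then obtain j where j: "j \<in> I" "p i = 2 * j" using Sh by auto
      show False
      proof (cases "i \<in> I")
        case True then show False using j that unfolding p_def by presburger
      next
        case False then show False using j that unfolding p_def by auto
      qed
    qed
    then show ?thesis by auto
  qed
  have b: "p ` {1..n} \<inter> Oh = Oh"
  proof -
    have "Oh \<subseteq> p ` {1..n}"
    proof
      fix y assume "y \<in> Oh"
      then obtain i where i: "i \<in> I" "y = 2*i+1" using Oh by auto
      then have "p i = y" "i \<in> {1..n}" using I unfolding p_def by auto
      then show "y \<in> p ` {1..n}" by force
    qed
    then show ?thesis by auto
  qed
  have cO: "card Oh = card I" unfolding Oh by (rule card_image) (auto simp: inj_on_def)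
  have "fval (ffun lam Sh Oh) n p = real (card I)"
    unfolding fval_def ffun_def a b cO by (simp add: gfun_def)
  moreover have "fval (ffun lam Sh Oh) n p \<le> opt_val n (ffun lam Sh Oh) X"
    unfolding opt_val_def using finP pP by (intro Max_ge) auto
  ultimately show "opt_val n (ffun lam Sh Oh) X \<ge> real (card I)" by simp
qed

lemma instance_greedy:
  fixes I :: "nat set" and n :: nat and lam :: real
  assumes I: "I \<subseteq> {1..n}" and lam: "0 \<le> lam" "lam \<le> 1"
    and Sh: "Sh = (\<lambda>i. 2*i) ` I" and Oh: "Oh = (\<lambda>i. 2*i+1) ` I"
    and X: "X = (\<lambda>i. if i \<in> I then {2*i, 2*i+1} else {2*i})"
    and g: "is_graph n E" and ind: "\<forall>i\<in>I. \<forall>j\<in>I. \<not> E i j"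
    and xs: "xs = (\<lambda>i. if i \<in> {1..n} then 2*i else undefined)"
  shows "xs \<in> greedy_outcomes n (ffun lam Sh Oh) X E"
    "fval (ffun lam Sh Oh) n xs = gfun lam (card I)"
proof -
  have finI: "finite I" using I finite_subset by blast
  have fin: "finite Sh" "finite Oh" using finI Sh Oh by auto
  have dj: "Sh \<inter> Oh = {}" unfolding Sh Oh by auto presburger
  have xP: "xs \<in> profiles n X" unfolding profiles_def xs X by auto
  have "\<forall>i\<in>{1..n}. \<forall>y\<in>X i. marg (ffun lam Sh Oh) {y} (xs ` nbrs E i) \<le> marg (ffun lam Sh Oh) {xs i} (xs ` nbrs E i)"
  proof (intro ballI)
    fix i y assume i: "i \<in> {1..n}" and y: "y \<in> X i"
    define B where "B = xs ` nbrs E i"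
    have nb: "j \<in> nbrs E i \<Longrightarrow> j \<in> {1..n} \<and> j < i \<and> E j i" for j
      using g unfolding nbrs_def is_graph_def by auto
    have Bform: "b \<in> B \<Longrightarrow> \<exists>j. j \<in> nbrs E i \<and> b = 2 * j" for b
      unfolding B_def xs using nb by auto
    show "marg (ffun lam Sh Oh) {y} (xs ` nbrs E i) \<le> marg (ffun lam Sh Oh) {xs i} (xs ` nbrs E i)"
    proof (cases "i \<in> I")
      case False
      then have "y = xs i" using y i unfolding X xs by auto
      then show ?thesis by simp
    next
      case True
      have BS: "B \<inter> Sh = {}"
      proof -
        have "b \<notin> Sh" if bB: "b \<in> B" for b
        proof
          assume "b \<in> Sh"
          then obtain k where k: "k \<in> I" "b = 2 * k" using Sh by auto
          obtain j where j: "j \<in> nbrs E i" "b = 2 * j" using Bform[OF bB] by auto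
          have "j = k" using j k by simp
          then show False using nb[OF j(1)] ind True k by auto
        qed
        then show ?thesis by auto
      qed
      have val: "marg (ffun lam Sh Oh) {z} B = 1" if z: "z \<in> {2*i, 2*i+1}" for z
      proof -
        have zB: "z \<notin> B"
        proof
          assume "z \<in> B"
          then obtain j where j: "j \<in> nbrs E i" "z = 2 * j" using Bform by auto
          then show False using z nb[OF j(1)] by auto
        qed
        have "z \<in> Sh \<or> z \<in> Oh" using z True Sh Oh by auto
        then show ?thesis using ffun_marg[OF fin dj zB, of lam] BS by auto
      qed
      have "y \<in> {2*i, 2*i+1}" using y True X by auto
      moreover have "xs i \<in> {2*i, 2*i+1}" using i xs by auto
      ultimately show ?thesis using val unfolding B_def by simp
    qed
  qed
  then show "xs \<in> greedy_outcomes n (ffun lam Sh Oh) X E" using xP unfolding greedy_outcomes_def by blast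
  have a: "xs ` {1..n} \<inter> Sh = Sh" using I unfolding xs Sh by force
  have b: "xs ` {1..n} \<inter> Oh = {}" unfolding xs Oh by auto presburger
  have cS: "card Sh = card I" unfolding Sh by (rule card_image) (auto simp: inj_on_def)
  show "fval (ffun lam Sh Oh) n xs = gfun lam (card I)"
    unfolding fval_def ffun_def a b cS by simp
qed

lemma inst_basic:
  assumes finS: "finite S" and F: "in_F lam S f" and P: "is_partition n S X"
  shows "greedy_outcomes n f X E \<noteq> {}" "finite (profiles n X)" "profiles n X \<noteq> {}"
    "\<And>x. x \<in> profiles n X \<Longrightarrow> fval f n x \<ge> 0"
proof -
  have XS: "i \<in> {1..n} \<Longrightarrow> X i \<subseteq> S" for i using P unfolding is_partition_def by auto
  have fin: "i \<in> {1..n} \<Longrightarrow> finite (X i)" for i using XS finS finite_subset by blast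
  have ne: "i \<in> {1..n} \<Longrightarrow> X i \<noteq> {}" for i using P unfolding is_partition_def by auto
  show "greedy_outcomes n f X E \<noteq> {}" by (rule greedy_exists[OF fin ne])
  show "finite (profiles n X)" unfolding profiles_def using fin by (intro finite_PiE) auto
  show "profiles n X \<noteq> {}" unfolding profiles_def using ne by (simp add: PiE_eq_empty_iff)
  fix x assume "x \<in> profiles n X"
  then have "x ` {1..n} \<subseteq> S" using XS PiE_mem unfolding profiles_def by fastforce
  then show "fval f n x \<ge> 0" unfolding fval_def using inF_nonneg[OF F] by blast
qed

lemma gamma_nonneg:
  assumes finS: "finite S" and F: "in_F lam S f" and P: "is_partition n S X" and o: "opt_val n f X > 0"
  shows "gamma n f X E \<ge> 0"
proof -
  note b = inst_basic[OF finS F P]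
  show ?thesis unfolding gamma_def
  proof (rule cInf_greatest)
    show "(\<lambda>x. fval f n x / opt_val n f X) ` greedy_outcomes n f X E \<noteq> {}" using b(1) by auto
    fix v assume "v \<in> (\<lambda>x. fval f n x / opt_val n f X) ` greedy_outcomes n f X E"
    then obtain x where x: "x \<in> greedy_outcomes n f X E" "v = fval f n x / opt_val n f X" by auto
    have "x \<in> profiles n X" using x unfolding greedy_outcomes_def by auto
    then show "0 \<le> v" using b(4) x o by simp
  qed
qed

lemma gamma_lam_bdd: "bdd_below {gamma n f X E | S f X.
      finite S \<and> in_F lam S f \<and> is_partition n S X \<and> opt_val n f X > 0}"
  by (rule bdd_belowI[of _ 0]) (auto intro: gamma_nonneg)

lemma gamma_G_lower:
  fixes r :: nat and lam :: real
  assumes r1: "1 \<le> r" and lam0: "0 \<le> lam" and lam1: "lam \<le> 1"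
    and finS: "finite S" and F: "in_F lam S f" and P: "is_partition n S X" and o: "opt_val n f X > 0"
    and G: "G = (\<lambda>i j. i \<in> {1..n} \<and> j \<in> {1..n} \<and> i \<noteq> j \<and> i mod r = j mod r)"
  shows "gamma n f X G \<ge> (real r - (real r - 1) * lam) / (real r + lam)"
proof -
  note b = inst_basic[OF finS F P]
  have "opt_val n f X \<in> fval f n ` profiles n X" unfolding opt_val_def using b(2,3) by (intro Max_in) auto
  then obtain p where p: "p \<in> profiles n X" "opt_val n f X = fval f n p" by auto
  show ?thesis unfolding gamma_def
  proof (rule cInf_greatest)
    show "(\<lambda>x. fval f n x / opt_val n f X) ` greedy_outcomes n f X G \<noteq> {}" using b(1) by auto
    fix v assume "v \<in> (\<lambda>x. fval f n x / opt_val n f X) ` greedy_outcomes n f X G"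
    then obtain x where x: "x \<in> greedy_outcomes n f X G" "v = fval f n x / opt_val n f X" by auto
    have m: "(real r - (real r - 1) * lam) * fval f n p \<le> (real r + lam) * fval f n x"
      by (rule lower_main[OF r1 lam0 lam1 F P x(1) p(1) G])
    have pos1: "real r + lam > 0" using r1 lam0 by simp
    have pos2: "fval f n p > 0" using o p by simp
    show "(real r - (real r - 1) * lam) / (real r + lam) \<le> v"
      unfolding x(2) p(2) using m pos1 pos2 by (simp add: divide_simps mult.commute)
  qed
qed

lemma gamma_lam_nonempty:
  fixes n :: nat and lam :: real
  assumes lam: "0 \<le> lam" "lam \<le> 1" and n: "1 \<le> n"
  shows "{gamma n f X E | S f X.
      finite S \<and> in_F lam S f \<and> is_partition n S X \<and> opt_val n f X > 0} \<noteq> {}"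
proof -
  define I where "I = {1..n}"
  define Sh where "Sh = (\<lambda>i. 2*i) ` I"
  define Oh where "Oh = (\<lambda>i. 2*i+1) ` I"
  define X where "X = (\<lambda>i::nat. if i \<in> I then {2*i, 2*i+1} else {2*i})"
  define S where "S = (\<Union>i\<in>{1..n}. X i)"
  have I0: "I \<subseteq> {1..n}" unfolding I_def by simp
  note ip = instance_props[OF I0 lam Sh_def Oh_def X_def S_def]
  have "card I = n" unfolding I_def by simp
  then have "opt_val n (ffun lam Sh Oh) X > 0" using ip(4) n by linarith
  then show ?thesis using ip by blast
qed

lemma upper_graph:
  fixes n q r :: nat and lam :: real
  assumes E: "E \<in> graphs_nq n q" and q1: "1 \<le> q" and qn: "q \<le> n" and lam: "0 \<le> lam" "lam \<le> 1"
    and r: "r = nat \<lceil>real n / real q\<rceil>"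
  shows "gamma_lam lam n E \<le> (real r - (real r - 1) * lam) / real r"
proof -
  have g: "is_graph n E" using E unfolding graphs_nq_def by auto
  obtain I where I: "I \<subseteq> {1..n}" "card I = r" and ind: "\<forall>i\<in>I. \<forall>j\<in>I. \<not> E i j"
    using indep_exists[OF E q1 r] by blast
  have r1: "r \<ge> 1"
  proof -
    have "real n / real q > 0" using q1 qn by simp
    then have "\<lceil>real n / real q\<rceil> \<ge> 1" by (simp add: le_ceiling_iff)
    then show ?thesis using r by linarith
  qed
  define Sh where "Sh = (\<lambda>i. 2*i) ` I"
  define Oh where "Oh = (\<lambda>i. 2*i+1) ` I"
  define X where "X = (\<lambda>i::nat. if i \<in> I then {2*i, 2*i+1} else {2*i})"
  define S where "S = (\<Union>i\<in>{1..n}. X i)"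
  define xs where "xs = (\<lambda>i::nat. if i \<in> {1..n} then 2*i else (undefined::nat))"
  note ip = instance_props[OF I(1) lam Sh_def Oh_def X_def S_def]
  note ig = instance_greedy[OF I(1) lam Sh_def Oh_def X_def g ind xs_def]
  let ?f = "ffun lam Sh Oh"
  have optr: "opt_val n ?f X \<ge> real r" using ip(4) I(2) by simp
  have optpos: "opt_val n ?f X > 0" using optr r1 by linarith
  have gr: "gfun lam r = real r - (real r - 1) * lam" using r1 unfolding gfun_def by (simp add: algebra_simps)
  have gnn: "gfun lam r \<ge> 0" by (rule gfun_nonneg[OF lam(2)])
  have "gamma_lam lam n E \<le> gamma n ?f X E"
    unfolding gamma_lam_def by (rule cInf_lower) (use ip optpos gamma_lam_bdd in auto)
  also have "gamma n ?f X E \<le> fval ?f n xs / opt_val n ?f X"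
    unfolding gamma_def
  proof (rule cInf_lower)
    show "fval ?f n xs / opt_val n ?f X \<in> (\<lambda>x. fval ?f n x / opt_val n ?f X) ` greedy_outcomes n ?f X E"
      using ig(1) by blast
    show "bdd_below ((\<lambda>x. fval ?f n x / opt_val n ?f X) ` greedy_outcomes n ?f X E)"
    proof (rule bdd_belowI[of _ 0])
      fix v assume "v \<in> (\<lambda>x. fval ?f n x / opt_val n ?f X) ` greedy_outcomes n ?f X E"
      then obtain x where x: "x \<in> greedy_outcomes n ?f X E" "v = fval ?f n x / opt_val n ?f X" by auto
      have "x \<in> profiles n X" using x unfolding greedy_outcomes_def by auto
      then show "0 \<le> v" using inst_basic(4)[OF ip(1-3)] x optpos by simp
    qed
  qed
  also have "fval ?f n xs / opt_val n ?f X = gfun lam r / opt_val n ?f X" using ig(2) I(2) by simp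
  also have "\<dots> \<le> gfun lam r / real r" using optr r1 gnn by (intro divide_left_mono) auto
  finally show ?thesis using gr by simp
qed

theorem theorem3:
  fixes n q :: nat and lam :: real
  assumes "1 \<le> q" and "q \<le> n" and "0 < lam" and "lam < 1"
  defines "r \<equiv> nat \<lceil>real n / real q\<rceil>"
  defines "G \<equiv> (\<lambda>i j. i \<in> {1..n} \<and> j \<in> {1..n} \<and> i \<noteq> j \<and> i mod r = j mod r)"
  shows "(real r - (real r - 1) * lam) / real r \<ge> eta lam n q
       \<and> eta lam n q \<ge> (real r - (real r - 1) * lam) / (real r + lam)
       \<and> G \<in> graphs_nq n q
       \<and> (\<forall>i\<in>{1..n}. real (Pbar G i) = \<lceil>real i / real r\<rceil>)
       \<and> gamma_lam lam n G \<ge> (real r - (real r - 1) * lam) / (real r + lam)"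
proof -
  note q1 = assms(1) and qn = assms(2)
  have lam: "0 \<le> lam" "lam \<le> 1" using assms(3,4) by auto
  have n1: "1 \<le> n" using q1 qn by simp
  have rge: "real n / real q \<le> real r"
  proof -
    have "real n / real q \<le> real_of_int \<lceil>real n / real q\<rceil>" by (rule le_of_int_ceiling)
    moreover have "real n / real q \<ge> 0" by simp
    then have "\<lceil>real n / real q\<rceil> \<ge> 0" by (metis ceiling_mono ceiling_zero)
    ultimately show ?thesis unfolding r_def by simp
  qed
  have r1: "r \<ge> 1"
  proof -
    have "real n / real q > 0" using q1 qn by simp
    then have "\<lceil>real n / real q\<rceil> \<ge> 1" by (simp add: le_ceiling_iff)
    then show ?thesis unfolding r_def by linarith
  qed
  have nqr: "n \<le> q * r"
  proof -
    have "real n \<le> real q * real r" using rge q1 by (simp add: divide_le_eq mult.commute)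
    then show ?thesis by (simp flip: of_nat_mult)
  qed
  have PG: "i \<in> {1..n} \<Longrightarrow> Pbar G i = (i - 1) div r + 1" for i
    by (rule Pbar_G[OF r1 meta_eq_to_obj_eq[OF G_def]])
  have Gin: "G \<in> graphs_nq n q"
  proof -
    have "is_graph n G" unfolding is_graph_def G_def by auto
    moreover have "Pbar G i \<le> q" if i: "i \<in> {1..n}" for i
    proof -
      have "i - 1 < q * r" using i nqr by auto
      then have "(i - 1) div r < q" using r1 by (simp add: div_less_iff_less_mult mult.commute)
      then show ?thesis using PG[OF i] by simp
    qed
    ultimately show ?thesis unfolding graphs_nq_def by auto
  qed
  have Pceil: "\<forall>i\<in>{1..n}. real (Pbar G i) = \<lceil>real i / real r\<rceil>"
    using PG ceil_div[OF r1] by auto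
  have gl: "gamma_lam lam n G \<ge> (real r - (real r - 1) * lam) / (real r + lam)"
    unfolding gamma_lam_def
  proof (rule cInf_greatest)
    show "{gamma n f X G | S f X. finite S \<and> in_F lam S f \<and> is_partition n S X \<and> opt_val n f X > 0} \<noteq> {}"
      by (rule gamma_lam_nonempty[OF lam n1])
    fix v assume "v \<in> {gamma n f X G | S f X. finite S \<and> in_F lam S f \<and> is_partition n S X \<and> opt_val n f X > 0}"
    then obtain S f X where "v = gamma n f X G" "finite S" "in_F lam S f" "is_partition n S X" "opt_val n f X > 0"
      by blast
    then show "(real r - (real r - 1) * lam) / (real r + lam) \<le> v"
      using gamma_G_lower[OF r1 lam, of S f n X G] meta_eq_to_obj_eq[OF G_def] by simp
  qed
  have ub: "E \<in> graphs_nq n q \<Longrightarrow> gamma_lam lam n E \<le> (real r - (real r - 1) * lam) / real r" for E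
    by (rule upper_graph[OF _ q1 qn lam meta_eq_to_obj_eq[OF r_def]])
  have e1: "eta lam n q \<le> (real r - (real r - 1) * lam) / real r"
    unfolding eta_def by (rule cSup_least) (use Gin ub in auto)
  have "gamma_lam lam n G \<le> eta lam n q"
    unfolding eta_def by (rule cSup_upper) (use Gin ub in \<open>auto intro!: bdd_aboveI\<close>)
  then have e2: "eta lam n q \<ge> (real r - (real r - 1) * lam) / (real r + lam)" using gl by linarith
  show ?thesis using e1 e2 Gin Pceil gl by blast
qed

end
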